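(* For every integer $i\ge 5$, $\overline{\alpha}(\{1,5,2i\})=\frac{i}{2i+5}$.
   Context: For a finite set $S$ of positive integers, the distance graph $G(S)$ has vertex set $\mathbb{Z}$, with $i,j$ adjacent iff $|i-j|\in S$. The density of $A\subseteq\mathbb{Z}$ is $\delta(A)=\limsup_{N\to\infty}\frac{|A\cap[-N,N]|}{2N+1}$, and the independence ratio $\overline{\alpha}(S)$ is the supremum of $\delta(A)$ over independent sets $A$ of $G(S)$. *)

theory Defs
  imports "HOL-Analysis.Analysis" "HOL-Library.Liminf_Limsup"
begin

definition dist_adj :: "nat set \<Rightarrow> int \<Rightarrow> int \<Rightarrow> bool" where
  "dist_adj S i j \<longleftrightarrow> nat \<bar>i - j\<bar> \<in> S \<and> i \<noteq> j"

definition dist_independent :: "nat set \<Rightarrow> int set \<Rightarrow> bool" where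
  "dist_independent S A \<longleftrightarrow> (\<forall>i\<in>A. \<forall>j\<in>A. \<not> dist_adj S i j)"

definition upper_density :: "int set \<Rightarrow> ereal" where
  "upper_density A = limsup (\<lambda>N::nat. ereal (real (card (A \<inter> {- int N .. int N})) / real (2 * N + 1)))"

definition indep_ratio :: "nat set \<Rightarrow> ereal" where
  "indep_ratio S = (SUP A \<in> {A. dist_independent S A}. upper_density A)"

end

theory Submission
  imports Defs "HOL-Real_Asymp.Real_Asymp"
begin


context
  fixes a :: "nat \<Rightarrow> int" and n :: nat
  assumes step: "\<And>k. k < n \<Longrightarrow> a (Suc k) - a k \<ge> 2"
  and no5: "\<And>j l. j < l \<Longrightarrow> l \<le> n \<Longrightarrow> a l - a j \<noteq> 5"
begin

lemma lb: "j \<le> l \<Longrightarrow> l \<le> n \<Longrightarrow> a l - a j \<ge> 2 * int (l - j)"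
proof (induction l)
  case 0 then show ?case by simp
next
  case (Suc l)
  show ?case
  proof (cases "j = Suc l")
    case True then show ?thesis by simp
  next
    case False
    then have "j \<le> l" using Suc by simp
    then have "a l - a j \<ge> 2 * int (l - j)" using Suc by simp
    moreover have "a (Suc l) - a l \<ge> 2" using step Suc by simp
    ultimately show ?thesis using \<open>j \<le> l\<close> by (simp add: Suc_diff_le)
  qed
qed

lemma M: "j + 2 \<le> l \<Longrightarrow> l \<le> n \<Longrightarrow> a l - a j \<noteq> 2 * int (l - j) + 1"
proof (induction "l - j" arbitrary: j rule: less_induct)
  case less
  show ?case
  proof
    assume eq: "a l - a j = 2 * int (l - j) + 1"
    consider "l = j + 2" | "l \<ge> j + 3" using less by linarith
    then show False
    proof cases
      case 1
      then have "a l - a j = 5" using eq by simp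
      then show False using no5[of j l] less 1 by simp
    next
      case 2
      have s1: "a (Suc j) - a j \<ge> 2" using step less by simp
      have r: "a l - a (Suc j) \<ge> 2 * int (l - Suc j)" using lb[of "Suc j" l] less 2 by simp
      have "int (l - j) = int (l - Suc j) + 1" using 2 by simp
      then have "a (Suc j) - a j \<le> 3" using eq r by linarith
      then consider "a (Suc j) - a j = 2" | "a (Suc j) - a j = 3" using s1 by linarith
      then show False
      proof cases
        case 1
        then have "a l - a (Suc j) = 2 * int (l - Suc j) + 1"
          using eq \<open>int (l - j) = int (l - Suc j) + 1\<close> by linarith
        moreover have "l - Suc j < l - j" using 2 by simp
        ultimately show False using less.hyps[of "Suc j"] less 2 by simp
      next
        case 3: 2
        have s2: "a (Suc (Suc j)) - a (Suc j) \<ge> 2" using step less 2 by simp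
        have r2: "a l - a (Suc (Suc j)) \<ge> 2 * int (l - Suc (Suc j))" using lb[of "Suc (Suc j)" l] less 2 by simp
        have "int (l - j) = int (l - Suc (Suc j)) + 2" using 2 by simp
        then have "a (Suc (Suc j)) - a j = 5" using eq r2 s2 3 by linarith
        then show False using no5[of j "Suc (Suc j)"] less 2 by simp
      qed
    qed
  qed
qed

lemma M2: "1 \<le> j \<Longrightarrow> j \<le> l \<Longrightarrow> l + 1 \<le> n \<Longrightarrow> a j - a (j - 1) = 2 \<Longrightarrow> a (l + 1) - a l = 2
   \<Longrightarrow> a l - a j \<noteq> 2 * int (l - j) + 3"
proof (induction "l - j" arbitrary: j rule: less_induct)
  case less
  show ?case
  proof
    assume eq: "a l - a j = 2 * int (l - j) + 3"
    have "l \<noteq> j" using eq by auto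
    then have jl: "Suc j \<le> l" using less by simp
    have s1: "a (Suc j) - a j \<ge> 2" using step less jl by simp
    have r: "a l - a (Suc j) \<ge> 2 * int (l - Suc j)" using lb[of "Suc j" l] less jl by simp
    have il: "int (l - j) = int (l - Suc j) + 1" using jl by simp
    then have "a (Suc j) - a j \<le> 5" using eq r by linarith
    then consider "a (Suc j) - a j = 2" | "a (Suc j) - a j = 3" | "a (Suc j) - a j = 4" | "a (Suc j) - a j = 5"
      using s1 by linarith
    then show False
    proof cases
      case 1
      have "a l - a (Suc j) = 2 * int (l - Suc j) + 3" using eq 1 il by linarith
      moreover have "l - Suc j < l - j" using jl by simp
      ultimately show False using less.hyps[of "Suc j"] less jl 1 by simp
    next
      case 2
      have "a (Suc j) - a (j - 1) = 5" using 2 less by simp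
      have "Suc j \<le> n" using less jl by simp
      moreover have "j - 1 < Suc j" by simp
      ultimately show False using no5 \<open>a (Suc j) - a (j - 1) = 5\<close> by blast
    next
      case 3
      have "l \<noteq> Suc j" using eq 3 il by auto
      then have "Suc j + 2 \<le> l + 1" using jl by simp
      moreover have "a (l+1) - a (Suc j) = 2 * int (l + 1 - Suc j) + 1"
      proof -
        have e1: "l + 1 - Suc j = l - j" by simp
        have e2: "a (l + 1) - a l = 2" using less.prems(5) .
        show ?thesis unfolding e1 using eq 3 e2 by linarith
      qed
      ultimately show False using M[of "Suc j" "l+1"] less by simp
    next
      case 4
      then show False using no5[of j "Suc j"] less jl by simp
    qed
  qed
qed

end

lemma fin2:
  fixes x0 x1 x2 x3 y2 y1 y0 M :: int
  assumes c1: "x1 - x0 \<ge> 2" "x2 - x1 \<ge> 2" "x3 - x2 \<ge> 2" "y1 - y2 \<ge> 2" "y0 - y1 \<ge> 2"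
  and c2: "y2 - x3 \<ge> 2 * M"
  and c3: "y0 - x0 \<le> 2 * M + 14"
  and  n5s: "x1 - x0 \<noteq> 5" "x2 - x1 \<noteq> 5" "x3 - x2 \<noteq> 5" "y1 - y2 \<noteq> 5" "y0 - y1 \<noteq> 5"
  and nn: "y0 - x0 \<noteq> 2 * M + 10" "y1 - x0 \<noteq> 2 * M + 10" "y0 - x1 \<noteq> 2 * M + 10"
     "y2 - x0 \<noteq> 2 * M + 10" "y1 - x1 \<noteq> 2 * M + 10" "y0 - x2 \<noteq> 2 * M + 10"
  and mm: "x2 - x0 \<noteq> 5" "x3 - x0 \<noteq> 7" "y2 - x0 \<noteq> 2 * M + 7" "y1 - x0 \<noteq> 2 * M + 9"
    "y0 - x0 \<noteq> 2 * M + 11" "x3 - x1 \<noteq> 5" "y2 - x1 \<noteq> 2 * M + 5" "y1 - x1 \<noteq> 2 * M + 7"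
    "y0 - x1 \<noteq> 2 * M + 9" "y1 - x2 \<noteq> 2 * M + 5" "y0 - x2 \<noteq> 2 * M + 7"
    "y0 - x3 \<noteq> 2 * M + 5" "y0 - y2 \<noteq> 5"
  and m2: "\<not> (x3 - x2 = 2 \<and> y1 - y2 = 2 \<and> y2 - x3 = 2 * M + 3)"
  shows False
  using assms by smt

lemma core:
  fixes a :: "nat \<Rightarrow> int" and n :: nat
  assumes n5: "n \<ge> 5"
  and step: "\<And>k. k < n \<Longrightarrow> a (Suc k) - a k \<ge> 2"
  and no5: "\<And>j l. j < l \<Longrightarrow> l \<le> n \<Longrightarrow> a l - a j \<noteq> 5"
  and no2n: "\<And>j l. j < l \<Longrightarrow> l \<le> n \<Longrightarrow> a l - a j \<noteq> 2 * int n"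
  and win: "a n - a 0 \<le> 2 * int n + 4"
  shows False
proof -
  note lb' = lb[of n a, OF step no5] and M' = M[of n a, OF step no5] and M2' = M2[of n a, OF step no5]
  obtain m where m: "n = m + 5" using n5 by (metis add.commute le_Suc_ex)
  define x0 where "x0 = a 0"
  define x1 where "x1 = a 1"
  define x2 where "x2 = a 2"
  define x3 where "x3 = a 3"
  define y2 where "y2 = a (m+3)"
  define y1 where "y1 = a (m+4)"
  define y0 where "y0 = a (m+5)"
  have c1: "x1 - x0 \<ge> 2" "x2 - x1 \<ge> 2" "x3 - x2 \<ge> 2" "y1 - y2 \<ge> 2" "y0 - y1 \<ge> 2"
    using step[of 0] step[of 1] step[of 2] step[of "m+3"] step[of "m+4"] m
    by (auto simp: x0_def x1_def x2_def x3_def y2_def y1_def y0_def numeral_eq_Suc)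
  have c2: "y2 - x3 \<ge> 2 * int m" using lb'[of 3 "m+3"] m by (simp add: x3_def y2_def)
  have c3: "y0 - x0 \<le> 2 * int m + 14" using win m by (simp add: x0_def y0_def)
  have n5s: "x1 - x0 \<noteq> 5" "x2 - x1 \<noteq> 5" "x3 - x2 \<noteq> 5" "y1 - y2 \<noteq> 5" "y0 - y1 \<noteq> 5"
    using no5[of 0 1] no5[of 1 2] no5[of 2 3] no5[of "m+3" "m+4"] no5[of "m+4" "m+5"] m
    by (auto simp: x0_def x1_def x2_def x3_def y2_def y1_def y0_def)
  have nn: "y0 - x0 \<noteq> 2 * int m + 10" "y1 - x0 \<noteq> 2 * int m + 10" "y0 - x1 \<noteq> 2 * int m + 10"
     "y2 - x0 \<noteq> 2 * int m + 10" "y1 - x1 \<noteq> 2 * int m + 10" "y0 - x2 \<noteq> 2 * int m + 10"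
    using no2n[of 0 "m+5"] no2n[of 0 "m+4"] no2n[of 1 "m+5"] no2n[of 0 "m+3"] no2n[of 1 "m+4"] no2n[of 2 "m+5"] m
    by (auto simp: x0_def x1_def x2_def x3_def y2_def y1_def y0_def)
  have mm: "x2 - x0 \<noteq> 5" "x3 - x0 \<noteq> 7" "y2 - x0 \<noteq> 2 * int m + 7" "y1 - x0 \<noteq> 2 * int m + 9"
    "y0 - x0 \<noteq> 2 * int m + 11" "x3 - x1 \<noteq> 5" "y2 - x1 \<noteq> 2 * int m + 5" "y1 - x1 \<noteq> 2 * int m + 7"
    "y0 - x1 \<noteq> 2 * int m + 9" "y1 - x2 \<noteq> 2 * int m + 5" "y0 - x2 \<noteq> 2 * int m + 7"
    "y0 - x3 \<noteq> 2 * int m + 5" "y0 - y2 \<noteq> 5"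
    using M'[of 0 2] M'[of 0 3] M'[of 0 "m+3"] M'[of 0 "m+4"] M'[of 0 "m+5"] M'[of 1 3] M'[of 1 "m+3"]
      M'[of 1 "m+4"] M'[of 1 "m+5"] M'[of 2 "m+4"] M'[of 2 "m+5"] M'[of 3 "m+5"] M'[of "m+3" "m+5"] m
    by (auto simp: x0_def x1_def x2_def x3_def y2_def y1_def y0_def algebra_simps)
  have m2: "\<not> (x3 - x2 = 2 \<and> y1 - y2 = 2 \<and> y2 - x3 = 2 * int m + 3)"
    using M2'[of 3 "m+3"] m by (auto simp: add.commute x0_def x1_def x2_def x3_def y2_def y1_def y0_def)
  show False using fin2[OF c1 c2 c3 n5s nn mm m2] .
qed



lemma indep_diff:
  assumes "dist_independent S A" "x \<in> A" "y \<in> A" "x < y" "nat (y - x) \<in> S"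
  shows False
proof -
  have "dist_adj S y x" unfolding dist_adj_def using assms(4,5) by simp
  then show False using assms(1-3) unfolding dist_independent_def by blast
qed

lemma window:
  fixes i :: nat and A :: "int set" and x :: int
  assumes ind: "dist_independent {1, 5, 2 * i} A" and i5: "i \<ge> 5"
  shows "card (A \<inter> {x..<x + int (2 * i + 5)}) \<le> i"
proof (rule ccontr)
  define F where "F = A \<inter> {x..<x + int (2 * i + 5)}"
  assume "\<not> card (A \<inter> {x..<x + int (2 * i + 5)}) \<le> i"
  then have cF: "card F \<ge> i + 1" unfolding F_def by simp
  have fF: "finite F" unfolding F_def by simp
  obtain l where l: "sorted_wrt (<) l" "set l = F" "length l = card F"
    using sorted_list_of_set.finite_set_strict_sorted[of F] fF by blast
  define a where "a k = l ! k" for k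
  have mem: "a k \<in> F" if "k \<le> i" for k
  proof -
    have "k < length l" using that cF l(3) by simp
    then have "l ! k \<in> set l" by (rule nth_mem)
    then show ?thesis using l(2) unfolding a_def by simp
  qed
  have lt: "a j < a k" if "j < k" "k \<le> i" for j k
    using sorted_wrt_nth_less[OF l(1) that(1)] that cF l(3) unfolding a_def by simp
  have memA: "a k \<in> A" if "k \<le> i" for k using mem[OF that] unfolding F_def by simp
  have nd: "a k - a j \<noteq> d" if "j < k" "k \<le> i" "nat d \<in> {1, 5, 2 * i}" for j k d
  proof
    assume "a k - a j = d"
    then show False using indep_diff[OF ind memA memA lt[OF that(1,2)]] that by simp
  qed
  show False
  proof (rule core[of i a])
    show "5 \<le> i" by (rule i5)
    show "2 \<le> a (Suc k) - a k" if "k < i" for k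
      using lt[of k "Suc k"] nd[of k "Suc k" 1] that by fastforce
    show "a l - a j \<noteq> 5" if "j < l" "l \<le> i" for j l
      using nd[of j l 5] that by simp
    show "a l - a j \<noteq> 2 * int i" if "j < l" "l \<le> i" for j l
      using nd[of j l "2 * int i"] that by (simp add: nat_mult_distrib)
    show "a i - a 0 \<le> 2 * int i + 4"
      using mem[of i] mem[of 0] unfolding F_def by auto
  qed
qed



lemma windows:
  fixes i :: nat and A :: "int set"
  assumes ind: "dist_independent {1, 5, 2 * i} A" and i5: "i \<ge> 5"
  shows "card (A \<inter> {y..<y + int (m * (2 * i + 5))}) \<le> m * i"
proof (induction m)
  case 0 then show ?case by simp
next
  case (Suc m)
  define p where "p = 2 * i + 5"
  define Q where "Q = int (m * p)"
  have q0: "0 \<le> Q" unfolding Q_def by simp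
  have qs: "int (Suc m * p) = Q + int p" unfolding Q_def by simp
  have "{y..<y + int (Suc m * p)} = {y..<y + Q} \<union> {y + Q..<y + Q + int p}"
    unfolding qs using q0 by auto
  then have "{y..<y + int (Suc m * p)} = {y..<y + int (m * p)} \<union> {y + int (m * p)..<y + int (m * p) + int p}"
    unfolding Q_def .
  then have "A \<inter> {y..<y + int (Suc m * p)} = (A \<inter> {y..<y + int (m * p)}) \<union> (A \<inter> {y + int (m * p)..<y + int (m * p) + int p})"
    by auto
  then have "card (A \<inter> {y..<y + int (Suc m * p)}) \<le> card (A \<inter> {y..<y + int (m * p)}) + card (A \<inter> {y + int (m * p)..<y + int (m * p) + int p})"
    by (simp add: card_Un_le)
  also have "\<dots> \<le> m * i + i"
    using Suc.IH window[OF ind i5, of "y + int (m * p)"] unfolding p_def by simp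
  finally show ?case unfolding p_def by simp
qed

lemma upper:
  fixes i :: nat and A :: "int set"
  assumes ind: "dist_independent {1, 5, 2 * i} A" and i5: "i \<ge> 5"
  shows "upper_density A \<le> ereal (real i / real (2 * i + 5))"
proof -
  define p where "p = 2 * i + 5"
  have p0: "p > 0" unfolding p_def by simp
  have bnd: "real (card (A \<inter> {- int N .. int N})) / real (2 * N + 1) \<le> real i / real p + real i / real (2 * N + 1)" for N
  proof -
    define m where "m = (2 * N + 1) div p + 1"
    have mp: "2 * N + 1 \<le> m * p" unfolding m_def using p0
      by (metis add.commute add_mult_distrib div_mult_mod_eq less_add_same_cancel1 less_le mod_less_divisor mult_1 nat_add_left_cancel_less)
    have mr: "real m \<le> real (2 * N + 1) / real p + 1"
    proof -
      have "real ((2 * N + 1) div p) * real p \<le> real (2 * N + 1)"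
        by (metis div_times_less_eq_dividend of_nat_le_iff of_nat_mult)
      then have "real ((2 * N + 1) div p) \<le> real (2 * N + 1) / real p" using p0 by (simp add: field_simps)
      then show ?thesis unfolding m_def by simp
    qed
    define Q where "Q = int (m * p)"
    have "int (2 * N + 1) \<le> Q" unfolding Q_def using mp by linarith
    then have "A \<inter> {- int N .. int N} \<subseteq> A \<inter> {- int N..<- int N + Q}" by auto
    then have sub: "A \<inter> {- int N .. int N} \<subseteq> A \<inter> {- int N..<- int N + int (m * p)}"
      unfolding Q_def .
    have "card (A \<inter> {- int N .. int N}) \<le> card (A \<inter> {- int N..<- int N + int (m * p)})"
      by (rule card_mono[OF _ sub]) simp
    also have "\<dots> \<le> m * i" using windows[OF ind i5, of "- int N" m] unfolding p_def .
    finally have c: "real (card (A \<inter> {- int N .. int N})) \<le> real m * real i" by (metis of_nat_le_iff of_nat_mult)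
    have "real m * real i \<le> (real (2 * N + 1) / real p + 1) * real i"
      using mr by (simp add: mult_right_mono)
    also have "\<dots> = real (2 * N + 1) * (real i / real p + real i / real (2 * N + 1))"
      by (simp add: field_simps)
    finally have "real (card (A \<inter> {- int N .. int N})) \<le> real (2 * N + 1) * (real i / real p + real i / real (2 * N + 1))"
      using c by linarith
    then show ?thesis by (simp add: field_simps)
  qed
  have lim: "(\<lambda>N::nat. real i / real p + real i / real (2 * N + 1)) \<longlonglongrightarrow> real i / real p"
    by real_asymp
  have "upper_density A \<le> limsup (\<lambda>N. ereal (real i / real p + real i / real (2 * N + 1)))"
    unfolding upper_density_def by (rule Limsup_mono) (use bnd in auto)
  also have "\<dots> = ereal (real i / real p)"
  proof (rule lim_imp_Limsup)
    show "\<not> trivial_limit (sequentially :: nat filter)" by simp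
    show "(\<lambda>N. ereal (real i / real p + real i / real (2 * N + 1))) \<longlonglongrightarrow> ereal (real i / real p)"
      unfolding lim_ereal by (rule lim)
  qed
  finally show ?thesis unfolding p_def .
qed



definition A0 :: "nat \<Rightarrow> int set" where
  "A0 i = {q * int (2 * i + 5) + 2 * r - int (i + 2) | q r. 0 \<le> r \<and> r < int i}"

lemma A0_gap:
  fixes t s I :: int
  assumes "I \<ge> 5" "\<bar>s\<bar> < I" "t * (2 * I + 5) + 2 * s \<noteq> 0"
  shows "\<bar>t * (2 * I + 5) + 2 * s\<bar> \<notin> {1, 5, 2 * I}"
proof -
  consider "t = 0" | "t = 1" | "t = -1" | "t \<ge> 2" | "t \<le> -2" by linarith
  then show ?thesis
  proof cases
    case 1
    then have eq: "t * (2 * I + 5) + 2 * s = 2 * s" by simp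
    show ?thesis using assms unfolding eq insert_iff empty_iff by presburger
  next
    case 2
    then have eq: "t * (2 * I + 5) + 2 * s = 2 * I + 5 + 2 * s" by simp
    show ?thesis using assms unfolding eq insert_iff empty_iff by presburger
  next
    case 3
    then have eq: "t * (2 * I + 5) + 2 * s = - 2 * I - 5 + 2 * s" by simp
    show ?thesis using assms unfolding eq insert_iff empty_iff by presburger
  next
    case 4
    have "t * (2 * I + 5) \<ge> 2 * (2 * I + 5)" using 4 assms by (intro mult_right_mono) auto
    then show ?thesis using assms by auto
  next
    case 5
    have "t * (2 * I + 5) \<le> (-2) * (2 * I + 5)" using 5 assms by (intro mult_right_mono) auto
    then show ?thesis using assms by auto
  qed
qed

lemma A0_indep:
  assumes "i \<ge> 5"
  shows "dist_independent {1, 5, 2 * i} (A0 i)"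
  unfolding dist_independent_def
proof (intro ballI notI)
  fix x y assume x: "x \<in> A0 i" and y: "y \<in> A0 i" and adj: "dist_adj {1, 5, 2 * i} x y"
  obtain q1 r1 where 1: "x = q1 * int (2 * i + 5) + 2 * r1 - int (i + 2)" "0 \<le> r1" "r1 < int i"
    using x unfolding A0_def by auto
  obtain q2 r2 where 2: "y = q2 * int (2 * i + 5) + 2 * r2 - int (i + 2)" "0 \<le> r2" "r2 < int i"
    using y unfolding A0_def by auto
  have d: "x - y = (q1 - q2) * (2 * int i + 5) + 2 * (r1 - r2)"
    using 1 2 by (simp add: algebra_simps)
  have ne: "(q1 - q2) * (2 * int i + 5) + 2 * (r1 - r2) \<noteq> 0" using adj d unfolding dist_adj_def by simp
  have "\<bar>(q1 - q2) * (2 * int i + 5) + 2 * (r1 - r2)\<bar> \<notin> {1, 5, 2 * int i}"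
    by (rule A0_gap) (use assms 1 2 ne in auto)
  moreover have "nat \<bar>x - y\<bar> \<in> {1, 5, 2 * i}" using adj unfolding dist_adj_def by simp
  ultimately show False unfolding d by auto
qed

lemma A0_count:
  fixes i k :: nat
  defines "p \<equiv> 2 * i + 5"
  defines "N \<equiv> k * p + i + 2"
  shows "(2 * k + 1) * i \<le> card (A0 i \<inter> {- int N .. int N})"
proof -
  define f where "f = (\<lambda>(q::nat, r::nat). (int q - int k) * int p + 2 * int r - int (i + 2))"
  define X where "X = {0..<2 * k + 1} \<times> {0..<i}"
  have inj: "inj_on f X"
  proof (rule inj_onI)
    fix a b assume a: "a \<in> X" and b: "b \<in> X" and e: "f a = f b"
    obtain q r where a': "a = (q, r)" by force
    obtain q' r' where b': "b = (q', r')" by force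
    have r: "r < i" "r' < i" using a b a' b' unfolding X_def by auto
    have e2: "(int q - int q') * int p = 2 * (int r' - int r)"
      using e a' b' unfolding f_def by (simp add: algebra_simps)
    have "q = q'"
    proof (rule ccontr)
      assume "q \<noteq> q'"
      then have "\<bar>int q - int q'\<bar> \<ge> 1" by linarith
      then have "\<bar>int q - int q'\<bar> * int p \<ge> 1 * int p" by (intro mult_right_mono) auto
      then have "\<bar>(int q - int q') * int p\<bar> \<ge> int p" by (simp add: abs_mult)
      then have "int p \<le> \<bar>2 * (int r' - int r)\<bar>" using e2 by simp
      then show False using r unfolding p_def by arith
    qed
    then show "a = b" using e2 a' b' by simp
  qed
  have sub: "f ` X \<subseteq> A0 i \<inter> {- int N .. int N}"
  proof
    fix z assume "z \<in> f ` X"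
    then obtain q r where qr: "q < 2 * k + 1" "r < i" "z = f (q, r)" unfolding X_def by auto
    have z: "z = (int q - int k) * int (2 * i + 5) + 2 * int r - int (i + 2)"
      using qr unfolding f_def p_def by simp
    have "z \<in> A0 i" unfolding A0_def z by (rule CollectI, rule exI[of _ "int q - int k"], rule exI[of _ "int r"]) (use qr in auto)
    moreover have lo: "(int q - int k) * int p \<ge> (- int k) * int p" by (intro mult_right_mono) auto
    moreover have hi: "(int q - int k) * int p \<le> int k * int p" using qr by (intro mult_right_mono) auto
    moreover have zp: "z = (int q - int k) * int p + 2 * int r - int (i + 2)"
      using qr unfolding f_def by simp
    moreover have Np: "int N = int k * int p + int i + 2" unfolding N_def by simp
    ultimately show "z \<in> A0 i \<inter> {- int N .. int N}"
      using qr(2) by auto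
  qed
  have "card X = (2 * k + 1) * i" unfolding X_def by simp
  also have "\<dots> = card (f ` X)" using card_image[OF inj] \<open>card X = (2 * k + 1) * i\<close> by simp
  also have "\<dots> \<le> card (A0 i \<inter> {- int N .. int N})" by (rule card_mono[OF _ sub]) simp
  finally show ?thesis using \<open>card X = (2 * k + 1) * i\<close> by simp
qed

lemma lower:
  fixes i :: nat
  shows "ereal (real i / real (2 * i + 5)) \<le> upper_density (A0 i)"
proof -
  define p where "p = 2 * i + 5"
  define X where "X = (\<lambda>N::nat. ereal (real (card (A0 i \<inter> {- int N .. int N})) / real (2 * N + 1)))"
  define r where "r = (\<lambda>k::nat. k * p + i + 2)"
  have sm: "strict_mono r" unfolding r_def p_def by (rule strict_monoI) simp
  have each: "ereal (real i / real p) \<le> (X \<circ> r) k" for k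
  proof -
    have c: "real ((2 * k + 1) * i) \<le> real (card (A0 i \<inter> {- int (r k) .. int (r k)}))"
      unfolding of_nat_le_iff r_def p_def by (rule A0_count)
    have e: "real (2 * r k + 1) = real (2 * k + 1) * real p" unfolding r_def p_def by (simp add: algebra_simps)
    have pos: "real (2 * k + 1) * real p > 0" unfolding p_def by simp
    have "real i / real p = real ((2 * k + 1) * i) / (real (2 * k + 1) * real p)"
      using pos by (simp add: p_def field_simps)
    also have "\<dots> \<le> real (card (A0 i \<inter> {- int (r k) .. int (r k)})) / (real (2 * k + 1) * real p)"
      using c pos by (intro divide_right_mono) auto
    finally show ?thesis unfolding X_def comp_def e by simp
  qed
  have "ereal (real i / real p) \<le> limsup (X \<circ> r)"
    by (rule le_Limsup) (use each in auto)
  also have "\<dots> \<le> limsup X" by (rule limsup_subseq_mono[OF sm])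
  finally show ?thesis unfolding upper_density_def X_def p_def .
qed


theorem theorem28:
  fixes i :: nat
  assumes "i \<ge> 5"
  shows "indep_ratio {1, 5, 2 * i} = ereal (real i / real (2 * i + 5))"
proof (rule antisym)
  show "indep_ratio {1, 5, 2 * i} \<le> ereal (real i / real (2 * i + 5))"
    unfolding indep_ratio_def by (rule SUP_least) (use upper assms in auto)
  have "upper_density (A0 i) \<le> indep_ratio {1, 5, 2 * i}"
    unfolding indep_ratio_def by (rule SUP_upper) (use A0_indep[OF assms] in auto)
  then show "ereal (real i / real (2 * i + 5)) \<le> indep_ratio {1, 5, 2 * i}"
    using lower[of i] by (rule order.trans[rotated])
qed

end
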